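(* Let $N \ge 1$ be an integer. For every integer $M$ with $0 \le M \le \binom{\lfloor N/2 \rfloor + 1}{2} - 1$, the pair $(N,M)$ is feasible for the family of all line graphs.
   Context: All graphs are finite and simple; $L(G)$ is the line graph of $G$. A pair $(N,M)$ is feasible (for the family of all line graphs) if there exists a graph $G$ such that $L(G)$ has exactly $N$ vertices and exactly $M$ edges. *)

theory Defs
  imports Main
begin

definition simple_graph :: "'a set \<Rightarrow> 'a set set \<Rightarrow> bool" where
  "simple_graph V E \<longleftrightarrow> finite V \<and>
     (\<forall>e\<in>E. \<exists>u v. e = {u, v} \<and> u \<noteq> v \<and> u \<in> V \<and> v \<in> V)"

definition line_graph_vertices :: "'a set set \<Rightarrow> 'a set set" where
  "line_graph_vertices E = E"

definition line_graph_edges :: "'a set set \<Rightarrow> 'a set set set" where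
  "line_graph_edges E = {{e, f} | e f. e \<in> E \<and> f \<in> E \<and> e \<noteq> f \<and> e \<inter> f \<noteq> {}}"

text \<open>(N,M) feasible for line graphs: some finite simple graph G has L(G) with exactly
  N vertices and M edges. Vertices of G are taken from nat (any finite graph is
  isomorphic to one on nat).\<close>
definition line_feasible :: "nat \<Rightarrow> nat \<Rightarrow> bool" where
  "line_feasible N M \<longleftrightarrow> (\<exists>(V::nat set) E. simple_graph V E \<and>
      card (line_graph_vertices E) = N \<and> card (line_graph_edges E) = M)"

end

theory Submission
  imports Defs
begin

lemma sg_sub: "simple_graph V E \<Longrightarrow> f \<in> E \<Longrightarrow> f \<subseteq> V"
proof -
  assume a: "simple_graph V E" and f: "f \<in> E"
  then obtain u v where "f = {u,v}" "u \<in> V" "v \<in> V" unfolding simple_graph_def by meson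
  thus "f \<subseteq> V" by simp
qed

lemma sg_insert: "simple_graph V E \<Longrightarrow> simple_graph (insert c V) E"
proof -
  assume a: "simple_graph V E"
  have "finite (insert c V)" using a unfolding simple_graph_def by simp
  moreover have "\<forall>e\<in>E. \<exists>u v. e = {u, v} \<and> u \<noteq> v \<and> u \<in> insert c V \<and> v \<in> insert c V"
  proof
    fix e assume "e \<in> E"
    then obtain u v where "e = {u,v}" "u \<noteq> v" "u \<in> V" "v \<in> V" using a unfolding simple_graph_def by meson
    thus "\<exists>u v. e = {u, v} \<and> u \<noteq> v \<and> u \<in> insert c V \<and> v \<in> insert c V" by blast
  qed
  ultimately show ?thesis unfolding simple_graph_def by simp
qed

lemma sg_finE: "simple_graph V E \<Longrightarrow> finite E"
proof -
  assume a: "simple_graph V E"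
  hence "E \<subseteq> Pow V" using sg_sub by (meson PowI subsetI)
  moreover have "finite V" using a unfolding simple_graph_def by simp
  ultimately show ?thesis by (meson finite_Pow_iff finite_subset)
qed

lemma add_edge:
  assumes sg: "simple_graph V E" and w: "w \<notin> V" and uw: "u \<noteq> w"
  shows "simple_graph (insert u (insert w V)) (insert {u,w} E)"
    and "card (insert {u,w} E) = card E + 1"
    and "card (line_graph_edges (insert {u,w} E)) = card (line_graph_edges E) + card {f\<in>E. u\<in>f}"
    and "card {f\<in>insert {u,w} E. u\<in>f} = card {f\<in>E. u\<in>f} + 1"
    and "card {f\<in>insert {u,w} E. w\<in>f} = 1"
proof -
  have fE: "finite E" using sg by (rule sg_finE)
  have nw: "\<And>f. f \<in> E \<Longrightarrow> w \<notin> f" using sg_sub[OF sg] w by blast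
  have nE: "{u,w} \<notin> E" using nw by blast
  have sg2: "finite V" "\<forall>e\<in>E. \<exists>a b. e = {a, b} \<and> a \<noteq> b \<and> a \<in> V \<and> b \<in> V"
    using sg unfolding simple_graph_def by simp_all
  have "\<forall>e\<in>insert {u,w} E. \<exists>a b. e = {a, b} \<and> a \<noteq> b \<and> a \<in> insert u (insert w V) \<and> b \<in> insert u (insert w V)"
  proof
    fix e assume "e \<in> insert {u,w} E"
    then show "\<exists>a b. e = {a, b} \<and> a \<noteq> b \<and> a \<in> insert u (insert w V) \<and> b \<in> insert u (insert w V)"
    proof
      assume "e = {u,w}" then show ?thesis using uw by blast
    next
      assume "e \<in> E"
      then obtain a b where "e = {a, b}" "a \<noteq> b" "a \<in> V" "b \<in> V" using sg2(2) by blast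
      then show ?thesis by blast
    qed
  qed
  then show "simple_graph (insert u (insert w V)) (insert {u,w} E)"
    using sg2(1) unfolding simple_graph_def by simp
  show "card (insert {u,w} E) = card E + 1" using fE nE by simp
  have "{f\<in>insert {u,w} E. u\<in>f} = insert {u,w} {f\<in>E. u\<in>f}" by auto
  thus "card {f\<in>insert {u,w} E. u\<in>f} = card {f\<in>E. u\<in>f} + 1" using fE nE by simp
  have "{f\<in>insert {u,w} E. w\<in>f} = {{u,w}}" using nw by auto
  thus "card {f\<in>insert {u,w} E. w\<in>f} = 1" by simp
  define e where "e = {u,w}"
  have inter: "\<And>f. f \<in> E \<Longrightarrow> (f \<inter> e \<noteq> {}) = (u \<in> f)"
    using nw unfolding e_def by auto
  have eq: "line_graph_edges (insert e E) = line_graph_edges E \<union> (\<lambda>f. {e,f}) ` {f\<in>E. u\<in>f}"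
  proof (rule set_eqI, rule iffI)
    fix x assume "x \<in> line_graph_edges (insert e E)"
    then obtain g h where x: "x = {g,h}" "g \<in> insert e E" "h \<in> insert e E" "g \<noteq> h" "g \<inter> h \<noteq> {}"
      unfolding line_graph_edges_def by blast
    show "x \<in> line_graph_edges E \<union> (\<lambda>f. {e,f}) ` {f\<in>E. u\<in>f}"
    proof (cases "g = e")
      case True
      then have "h \<in> E" "u \<in> h" using x inter by (auto simp: Int_commute)
      then show ?thesis using x True by blast
    next
      case False
      show ?thesis
      proof (cases "h = e")
        case True
        then have "g \<in> E" "u \<in> g" using x inter False by auto
        then show ?thesis using x True by (auto simp: insert_commute)
      next
        case False2: False
        then have "x \<in> line_graph_edges E" using x False unfolding line_graph_edges_def by blast
        then show ?thesis by blast
      qed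
    qed
  next
    fix x assume "x \<in> line_graph_edges E \<union> (\<lambda>f. {e,f}) ` {f\<in>E. u\<in>f}"
    then show "x \<in> line_graph_edges (insert e E)"
    proof
      assume "x \<in> line_graph_edges E" then show ?thesis unfolding line_graph_edges_def by blast
    next
      assume "x \<in> (\<lambda>f. {e,f}) ` {f\<in>E. u\<in>f}"
      then obtain f where f: "x = {e,f}" "f \<in> E" "u \<in> f" by blast
      have "e \<noteq> f" using f nE e_def by blast
      moreover have "e \<inter> f \<noteq> {}" using f e_def by blast
      ultimately show ?thesis using f unfolding line_graph_edges_def by blast
    qed
  qed
  have fL: "finite (line_graph_edges E)"
  proof -
    have "line_graph_edges E \<subseteq> Pow E" unfolding line_graph_edges_def by blast
    thus ?thesis using fE by (meson finite_Pow_iff finite_subset)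
  qed
  have disj: "line_graph_edges E \<inter> (\<lambda>f. {e,f}) ` {f\<in>E. u\<in>f} = {}"
  proof (rule ccontr)
    assume "line_graph_edges E \<inter> (\<lambda>f. {e,f}) ` {f\<in>E. u\<in>f} \<noteq> {}"
    then obtain x where x1: "x \<in> line_graph_edges E" and x2: "x \<in> (\<lambda>f. {e,f}) ` {f\<in>E. u\<in>f}"
      by blast
    from x1 obtain g h where gh: "x = {g,h}" "g \<in> E" "h \<in> E" unfolding line_graph_edges_def by blast
    from x2 obtain f where "x = {e,f}" by blast
    hence "e \<in> {g,h}" using gh by simp
    hence "e \<in> E" using gh by blast
    thus False using nE e_def by simp
  qed
  have inj: "inj_on (\<lambda>f. {e,f}) {f\<in>E. u\<in>f}"
  proof (rule inj_onI)
    fix f g assume f: "f \<in> {f\<in>E. u\<in>f}" and g: "g \<in> {f\<in>E. u\<in>f}" and eq: "{e,f} = {e,g}"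
    have "f \<noteq> e" "g \<noteq> e" using f g nE e_def by auto
    moreover have "f \<in> {e,g}" using eq by blast
    ultimately show "f = g" by simp
  qed
  have "card (line_graph_edges (insert e E)) = card (line_graph_edges E) + card ((\<lambda>f. {e,f}) ` {f\<in>E. u\<in>f})"
    unfolding eq using fL fE disj by (simp add: card_Un_disjoint)
  also have "card ((\<lambda>f. {e,f}) ` {f\<in>E. u\<in>f}) = card {f\<in>E. u\<in>f}" using inj by (rule card_image)
  finally show "card (line_graph_edges (insert {u,w} E)) = card (line_graph_edges E) + card {f\<in>E. u\<in>f}"
    unfolding e_def .
qed

definition Q :: "nat \<Rightarrow> nat \<Rightarrow> nat \<Rightarrow> nat \<Rightarrow> bool" where
  "Q N M c t \<longleftrightarrow> (\<exists>(V::nat set) E. simple_graph V E \<and> card E = N \<and>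
     card (line_graph_edges E) = M \<and> card {f\<in>E. c\<in>f} = t)"

lemma fresh: "finite (V::nat set) \<Longrightarrow> \<exists>w. w \<notin> V"
  using ex_new_if_finite infinite_UNIV_nat by blast

lemma Q0: "Q 0 0 0 0"
proof -
  have "simple_graph ({}::nat set) {}" unfolding simple_graph_def by simp
  moreover have "line_graph_edges ({}::nat set set) = {}" unfolding line_graph_edges_def by simp
  ultimately show ?thesis unfolding Q_def by force
qed

lemma L1: "Q N M c t \<Longrightarrow> Q (N+1) (M+t) c (t+1)"
proof -
  assume "Q N M c t"
  then obtain V :: "nat set" and E where h: "simple_graph V E" "card E = N" "card (line_graph_edges E) = M"
    "card {f\<in>E. c\<in>f} = t" unfolding Q_def by blast
  have "finite (insert c V)" using h(1) unfolding simple_graph_def by simp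
  then obtain w where w: "w \<notin> insert c V" using fresh by blast
  have sg: "simple_graph (insert c V) E" using h(1) by (rule sg_insert)
  have wc: "w \<notin> V" "c \<noteq> w" using w by auto
  note A = add_edge[OF sg w wc(2)]
  show ?thesis unfolding Q_def
  proof (intro exI conjI)
    show "simple_graph (insert c (insert w (insert c V))) (insert {c,w} E)" by (rule A(1))
    show "card (insert {c,w} E) = N+1" using A(2) h(2) by simp
    show "card (line_graph_edges (insert {c,w} E)) = M+t" using A(3) h(3) h(4) by simp
    show "card {f \<in> insert {c,w} E. c\<in>f} = t+1" using A(4) h(4) by simp
  qed
qed

lemma L2: "Q N M c t \<Longrightarrow> \<exists>w. Q (N+1) (M+t) w 1"
proof -
  assume "Q N M c t"
  then obtain V :: "nat set" and E where h: "simple_graph V E" "card E = N" "card (line_graph_edges E) = M"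
    "card {f\<in>E. c\<in>f} = t" unfolding Q_def by blast
  have "finite (insert c V)" using h(1) unfolding simple_graph_def by simp
  then obtain w where w: "w \<notin> insert c V" using fresh by blast
  have sg: "simple_graph (insert c V) E" using h(1) by (rule sg_insert)
  have wc: "w \<notin> V" "c \<noteq> w" using w by auto
  note A = add_edge[OF sg w wc(2)]
  have "Q (N+1) (M+t) w 1" unfolding Q_def
  proof (intro exI conjI)
    show "simple_graph (insert c (insert w (insert c V))) (insert {c,w} E)" by (rule A(1))
    show "card (insert {c,w} E) = N+1" using A(2) h(2) by simp
    show "card (line_graph_edges (insert {c,w} E)) = M+t" using A(3) h(3) h(4) by simp
    show "card {f \<in> insert {c,w} E. w\<in>f} = 1" by (rule A(5))
  qed
  thus ?thesis by blast
qed

lemma L3: "Q N M c t \<Longrightarrow> \<exists>a. Q (N+1) M a 1"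
proof -
  assume "Q N M c t"
  then obtain V :: "nat set" and E where h: "simple_graph V E" "card E = N" "card (line_graph_edges E) = M"
    unfolding Q_def by auto
  have "finite V" using h(1) unfolding simple_graph_def by simp
  then obtain u where u: "u \<notin> V" using fresh by blast
  have "finite (insert u V)" using h(1) unfolding simple_graph_def by simp
  then obtain w where w: "w \<notin> insert u V" using fresh by blast
  have sg: "simple_graph (insert u V) E" using h(1) by (rule sg_insert)

  have z: "{f\<in>E. u\<in>f} = {}" using sg_sub[OF h(1)] u by blast
  have wc: "w \<notin> V" "u \<noteq> w" using w by auto
  note A = add_edge[OF sg w wc(2)]
  have "Q (N+1) M u 1" unfolding Q_def
  proof (intro exI conjI)
    show "simple_graph (insert u (insert w (insert u V))) (insert {u,w} E)" by (rule A(1))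
    show "card (insert {u,w} E) = N+1" using A(2) h(2) by simp
    show "card (line_graph_edges (insert {u,w} E)) = M" using A(3) h(3) z by simp
    show "card {f \<in> insert {u,w} E. u\<in>f} = 1" using A(4) z by simp
  qed
  thus ?thesis by blast
qed

lemma star: "Q d (d choose 2) 0 d"
proof (induction d)
  case 0 then show ?case using Q0 by (simp add: binomial_eq_0)
next
  case (Suc d)
  have e: "Suc d choose 2 = (d choose 2) + d"
    using binomial_Suc_Suc[of d 1] by (simp add: numeral_2_eq_2)
  from L1[OF Suc] have "Q (d+1) ((d choose 2) + d) 0 (d+1)" .
  then show ?case unfolding e by simp
qed

lemma path: "Q N M c 1 \<Longrightarrow> \<exists>w. Q (N+j) (M+j) w 1"
proof (induction j arbitrary: N M c)
  case 0 then show ?case by auto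
next
  case (Suc j)
  obtain w where "Q (N+1) (M+1) w 1" using L2[OF Suc.prems] by blast
  from Suc.IH[OF this] have "\<exists>w. Q (N + 1 + j) (M + 1 + j) w 1" .
  moreover have "N + 1 + j = N + Suc j" "M + 1 + j = M + Suc j" by simp_all
  ultimately show ?case by metis
qed

lemma pad: "Q N M c t \<Longrightarrow> \<exists>a b. Q (N+q) M a b"
proof (induction q)
  case 0 then show ?case by auto
next
  case (Suc q)
  then obtain a b where "Q (N+q) M a b" by blast
  from L3[OF this] have "\<exists>a. Q (N + q + 1) M a 1" .
  moreover have "N + q + 1 = N + Suc q" by simp
  ultimately show ?case by metis
qed

lemma choose_d: "M < (d+1) choose 2 \<Longrightarrow> \<exists>d'. 1 \<le> d' \<and> d' \<le> d \<and> (d' choose 2) \<le> M \<and> M < (d' choose 2) + d'"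
proof (induction d)
  case 0 then show ?case by (simp add: binomial_eq_0)
next
  case (Suc d)
  have e: "Suc d + 1 choose 2 = (Suc d choose 2) + Suc d"
    using binomial_Suc_Suc[of "Suc d" 1] by (simp add: numeral_2_eq_2)
  show ?case
  proof (cases "M < (d+1) choose 2")
    case True
    then obtain d' where "1 \<le> d'" "d' \<le> d" "(d' choose 2) \<le> M" "M < (d' choose 2) + d'"
      using Suc.IH by blast
    then show ?thesis by (intro exI[of _ d']) simp
  next
    case False
    hence "(Suc d choose 2) \<le> M" by simp
    moreover have "M < (Suc d choose 2) + Suc d" using Suc.prems e by linarith
    ultimately show ?thesis by (intro exI[of _ "Suc d"]) simp
  qed
qed

theorem mainTheorem17:
  fixes N M :: nat
  assumes "N \<ge> 1"
    and "int M \<le> int ((N div 2 + 1) choose 2) - 1"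
  shows "line_feasible N M"
proof -
  define k where "k = N div 2"
  have "M < (k+1) choose 2" using assms(2) unfolding k_def by linarith
  then obtain d where d: "1 \<le> d" "d \<le> k" "(d choose 2) \<le> M" "M < (d choose 2) + d"
    using choose_d by blast
  define r where "r = M - (d choose 2)"
  have k2: "2*k \<le> N" unfolding k_def by simp
  have le: "d + 1 + r \<le> N" using d k2 unfolding r_def by linarith
  obtain a where "Q (d+1) (d choose 2) a 1" using L3[OF star] by blast
  then obtain w where "Q (d+1+r) ((d choose 2) + r) w 1" using path by blast
  then obtain a b where "Q (d+1+r+(N-(d+1+r))) ((d choose 2)+r) a b" using pad by blast
  hence "Q N M a b" using le d(3) unfolding r_def by simp
  then obtain V :: "nat set" and E where "simple_graph V E" "card E = N" "card (line_graph_edges E) = M"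
    unfolding Q_def by auto
  thus ?thesis unfolding line_feasible_def line_graph_vertices_def by auto
qed

end
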